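(* Let $(B,M,A,\rho,e,r,c)$ be a $\mathbf{k}$-bimodule with factorization structure. Then the map $\Delta:\mathbf{k}\oplus(B,\cdot_e)\to A$ defined by $\Delta(\lambda,b)=\lambda 1_A+r\big(\rho(b)(c(1_A))\big)$ is a morphism of unital $\mathbf{k}$-algebras.
   Context: $\mathbf{k}$ is a commutative $\mathbb{Q}$-algebra. A $\mathbf{k}$-bimodule is $(B,M,A,\rho)$ with $A,B$ unital $\mathbf{k}$-algebras, $M$ a right $A$-module and $\rho:B\to\mathrm{End}_A(M)$ an algebra morphism; a factorization structure is $(e,r,c)$ with $e\in B$, $r:M\to A$, $c:A\to M$ right $A$-module morphisms and $\rho(e)=c\circ r$. For $e\in B$, $\mathbf{k}\oplus(B,\cdot_e)$ is the unital algebra on $\mathbf{k}\oplus B$ with product $(\lambda,b)(\lambda',b')=(\lambda\lambda',\lambda b'+\lambda'b+beb')$ and unit $(1,0)$. *)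

theory Defs
  imports Main
begin

definition Q_algebra_ring :: "'k::comm_ring_1 itself \<Rightarrow> bool" where
  "Q_algebra_ring _ \<longleftrightarrow> (\<forall>n::nat. n > 0 \<longrightarrow> (\<exists>u::'k. of_nat n * u = 1))"

definition k_algebra :: "('k::comm_ring_1 \<Rightarrow> 'a::ring_1 \<Rightarrow> 'a) \<Rightarrow> bool" where
  "k_algebra smul \<longleftrightarrow>
     (\<forall>l a b. smul l (a + b) = smul l a + smul l b) \<and>
     (\<forall>l m a. smul (l + m) a = smul l a + smul m a) \<and>
     (\<forall>l m a. smul (l * m) a = smul l (smul m a)) \<and>
     (\<forall>a. smul 1 a = a) \<and>
     (\<forall>l a b. smul l (a * b) = smul l a * b) \<and>
     (\<forall>l a b. smul l (a * b) = a * smul l b)"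

definition right_module :: "('m::ab_group_add \<Rightarrow> 'a::ring_1 \<Rightarrow> 'm) \<Rightarrow> bool" where
  "right_module act \<longleftrightarrow>
     (\<forall>m n a. act (m + n) a = act m a + act n a) \<and>
     (\<forall>m a b. act m (a + b) = act m a + act m b) \<and>
     (\<forall>m a b. act m (a * b) = act (act m a) b) \<and>
     (\<forall>m. act m 1 = m)"

definition rmod_hom ::
  "('m::ab_group_add \<Rightarrow> 'a::ring_1 \<Rightarrow> 'm) \<Rightarrow> ('n::ab_group_add \<Rightarrow> 'a \<Rightarrow> 'n) \<Rightarrow> ('m \<Rightarrow> 'n) \<Rightarrow> bool" where
  "rmod_hom actM actN f \<longleftrightarrow>
     (\<forall>m n. f (m + n) = f m + f n) \<and> (\<forall>m a. f (actM m a) = actN (f m) a)"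

text \<open>rho : B \<rightarrow> End_A(M) is a morphism of unital k-algebras; the k-action on
  End_A(M) is (l f)(m) = f(m) . (l 1_A).\<close>
definition endo_alg_hom ::
  "('k::comm_ring_1 \<Rightarrow> 'a::ring_1 \<Rightarrow> 'a) \<Rightarrow> ('k \<Rightarrow> 'b::ring_1 \<Rightarrow> 'b) \<Rightarrow>
   ('m::ab_group_add \<Rightarrow> 'a \<Rightarrow> 'm) \<Rightarrow> ('b \<Rightarrow> 'm \<Rightarrow> 'm) \<Rightarrow> bool" where
  "endo_alg_hom smulA smulB act rho \<longleftrightarrow>
     (\<forall>b. rmod_hom act act (rho b)) \<and>
     (\<forall>b b' m. rho (b + b') m = rho b m + rho b' m) \<and>
     (\<forall>l b m. rho (smulB l b) m = act (rho b m) (smulA l 1)) \<and>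
     (\<forall>b b'. rho (b * b') = rho b \<circ> rho b') \<and>
     rho 1 = id"

definition kB_add :: "('k::comm_ring_1 \<times> 'b::ring_1) \<Rightarrow> ('k \<times> 'b) \<Rightarrow> ('k \<times> 'b)" where
  "kB_add x y = (fst x + fst y, snd x + snd y)"

definition kB_smul :: "('k::comm_ring_1 \<Rightarrow> 'b::ring_1 \<Rightarrow> 'b) \<Rightarrow> 'k \<Rightarrow> ('k \<times> 'b) \<Rightarrow> ('k \<times> 'b)" where
  "kB_smul smulB l x = (l * fst x, smulB l (snd x))"

definition kB_mult ::
  "('k::comm_ring_1 \<Rightarrow> 'b::ring_1 \<Rightarrow> 'b) \<Rightarrow> 'b \<Rightarrow> ('k \<times> 'b) \<Rightarrow> ('k \<times> 'b) \<Rightarrow> ('k \<times> 'b)" where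
  "kB_mult smulB e x y =
     (fst x * fst y, smulB (fst x) (snd y) + smulB (fst y) (snd x) + snd x * e * snd y)"

definition kB_one :: "('k::comm_ring_1 \<times> 'b::ring_1)" where
  "kB_one = (1, 0)"

definition Delta ::
  "('k::comm_ring_1 \<Rightarrow> 'a::ring_1 \<Rightarrow> 'a) \<Rightarrow> ('b::ring_1 \<Rightarrow> 'm \<Rightarrow> 'm) \<Rightarrow> ('m \<Rightarrow> 'a) \<Rightarrow> ('a \<Rightarrow> 'm)
   \<Rightarrow> ('k \<times> 'b) \<Rightarrow> 'a" where
  "Delta smulA rho r c x = smulA (fst x) 1 + r (rho (snd x) (c 1))"

definition unital_alg_hom_kB ::
  "('k::comm_ring_1 \<Rightarrow> 'b::ring_1 \<Rightarrow> 'b) \<Rightarrow> 'b \<Rightarrow> ('k \<Rightarrow> 'a::ring_1 \<Rightarrow> 'a) \<Rightarrow> (('k \<times> 'b) \<Rightarrow> 'a) \<Rightarrow> bool" where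
  "unital_alg_hom_kB smulB e smulA f \<longleftrightarrow>
     (\<forall>x y. f (kB_add x y) = f x + f y) \<and>
     (\<forall>l x. f (kB_smul smulB l x) = smulA l (f x)) \<and>
     (\<forall>x y. f (kB_mult smulB e x y) = f x * f y) \<and>
     f kB_one = 1"

end

theory Submission
  imports Defs
begin

theorem mainTheorem15:
  fixes smulA :: "'k::comm_ring_1 \<Rightarrow> 'a::ring_1 \<Rightarrow> 'a"
    and smulB :: "'k \<Rightarrow> 'b::ring_1 \<Rightarrow> 'b"
    and act :: "'m::ab_group_add \<Rightarrow> 'a \<Rightarrow> 'm"
    and rho :: "'b \<Rightarrow> 'm \<Rightarrow> 'm"
    and e :: 'b and r :: "'m \<Rightarrow> 'a" and c :: "'a \<Rightarrow> 'm"
  assumes "Q_algebra_ring TYPE('k)"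
    and "k_algebra smulA" and "k_algebra smulB"
    and "right_module act"
    and "endo_alg_hom smulA smulB act rho"
    and "rmod_hom act (*) r"
    and "rmod_hom (*) act c"
    and "rho e = c \<circ> r"
  shows "unital_alg_hom_kB smulB e smulA (Delta smulA rho r c)"
proof -
  note A = assms(2)[unfolded k_algebra_def]
  note E = assms(5)[unfolded endo_alg_hom_def rmod_hom_def]
  note R = assms(6)[unfolded rmod_hom_def]
  note C = assms(7)[unfolded rmod_hom_def]
  define D where "D b = r (rho b (c 1))" for b
  have Dadd: "D (b + b') = D b + D b'" for b b' using E R by (simp add: D_def)
  have Dsm: "D (smulB l b) = smulA l (D b)" for l b
  proof -
    have "D (smulB l b) = D b * smulA l 1" using E R by (simp add: D_def)
    also have "\<dots> = smulA l (D b)" using A by (metis mult.right_neutral)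
    finally show ?thesis .
  qed
  have Dmul: "D (b * e * b') = D b * D b'" for b b'
  proof -
    have "D (b * e * b') = r (rho b (c (D b')))" using E assms(8) by (simp add: D_def)
    also have "c (D b') = act (c 1) (D b')" using C by (metis mult_1)
    finally show ?thesis using E R by (simp add: D_def)
  qed
  have r0: "r 0 = 0" using R by (metis add_cancel_right_right)
  have rho0: "rho 0 m = 0" for m using E by (metis add_cancel_right_right add_0)
  have s1: "smulA l 1 * x = smulA l x" for l x using A by (metis mult_1)
  have s2: "x * smulA l 1 = smulA l x" for l x using A by (metis mult.right_neutral)
  have Dl: "Delta smulA rho r c x = smulA (fst x) 1 + D (snd x)" for x
    by (simp add: Delta_def D_def)
  show ?thesis
    unfolding unital_alg_hom_kB_def Dl
  proof (intro conjI allI)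
    fix x y :: "'k \<times> 'b"
    show "smulA (fst (kB_add x y)) 1 + D (snd (kB_add x y)) =
          smulA (fst x) 1 + D (snd x) + (smulA (fst y) 1 + D (snd y))"
      using A by (simp add: kB_add_def Dadd algebra_simps)
  next
    fix l and x :: "'k \<times> 'b"
    show "smulA (fst (kB_smul smulB l x)) 1 + D (snd (kB_smul smulB l x)) =
          smulA l (smulA (fst x) 1 + D (snd x))"
      using A by (simp add: kB_smul_def Dsm)
  next
    fix x y :: "'k \<times> 'b"
    show "smulA (fst (kB_mult smulB e x y)) 1 + D (snd (kB_mult smulB e x y)) =
          (smulA (fst x) 1 + D (snd x)) * (smulA (fst y) 1 + D (snd y))"
    proof -
      have sc: "smulA (fst y) (smulA (fst x) 1) = smulA (fst x) (smulA (fst y) 1)"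
        using A by (metis mult.commute)
      show ?thesis
        using A by (simp add: kB_mult_def Dadd Dsm Dmul distrib_left distrib_right s1 s2 sc add_ac)
    qed
  next
    show "smulA (fst kB_one) 1 + D (snd kB_one) = 1"
      using A by (simp add: kB_one_def D_def rho0 r0)
  qed
qed

end
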